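(* Let $q_{n,k}$ be the number of induced subgraphs of the matchable Lucas cube $\Omega_n$ isomorphic to the $k$-dimensional hypercube $Q_k$. Then: (1) for $n\ge2$, $q_{n,0}=L_n$ and $q_{n,1}=nF_{n-1}$; (2) for $n\ge4$, $q_{n,2}=\frac15 nF_{n-3}+\frac1{10}(n-3)nL_{n-2}$; (3) for $n\ge6$, $q_{n,3}=\frac{2}{25}nF_{n-5}+\frac1{25}(n-5)nL_{n-4}+\frac1{30}(n^2-9n+20)nF_{n-3}$.
   Context: For $n\ge1$ let $\Xi_n$ be the poset on $\{x_1,\dots,x_n\}$ whose cover relations are exactly: $x_2\prec x_1$, $x_3\prec x_2$, and for $3\le i\le n-1$, $x_i\prec x_{i+1}$ if $i$ is odd and $x_{i+1}\prec x_i$ if $i$ is even (so $x_1>x_2>x_3<x_4>x_5<\cdots$). A filter of a poset is an up-closed subset. The matchable Lucas cube $\Omega_n$ is the graph whose vertices are the filters of $\Xi_n$, two filters being adjacent iff one is obtained from the other by deleting a single element (the undirected Hasse diagram of the filter lattice); $\Omega_0$ is the one-vertex graph. $L_n$ are the Lucas numbers ($L_0=2$, $L_1=1$, $L_n=L_{n-1}+L_{n-2}$) and $F_n$ the Fibonacci numbers ($F_0=0$, $F_1=1$, $F_n=F_{n-1}+F_{n-2}$). *)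

theory Defs
  imports Main "HOL-Number_Theory.Fib"
begin

fun lucas :: "nat \<Rightarrow> nat" where
  "lucas 0 = 2"
| "lucas (Suc 0) = 1"
| "lucas (Suc (Suc n)) = lucas (Suc n) + lucas n"

text \<open>Cover relation of the poset Xi_n on {1..n}: xi_cover n i j means x_i is covered by x_j.\<close>
definition xi_cover :: "nat \<Rightarrow> nat \<Rightarrow> nat \<Rightarrow> bool" where
  "xi_cover n i j \<longleftrightarrow>
     (i = 2 \<and> j = 1 \<and> n \<ge> 2)
   \<or> (i = 3 \<and> j = 2 \<and> n \<ge> 3)
   \<or> (\<exists>m. 3 \<le> m \<and> m \<le> n - 1 \<and>
          ((odd m \<and> i = m \<and> j = m + 1) \<or> (even m \<and> i = m + 1 \<and> j = m)))"

definition xi_le :: "nat \<Rightarrow> nat \<Rightarrow> nat \<Rightarrow> bool" where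
  "xi_le n = (xi_cover n)\<^sup>*\<^sup>*"

definition xi_filter :: "nat \<Rightarrow> nat set \<Rightarrow> bool" where
  "xi_filter n F \<longleftrightarrow> F \<subseteq> {1..n} \<and>
     (\<forall>x\<in>F. \<forall>y\<in>{1..n}. xi_le n x y \<longrightarrow> y \<in> F)"

definition omega_vertices :: "nat \<Rightarrow> nat set set" where
  "omega_vertices n = {F. xi_filter n F}"

definition omega_adj :: "nat set \<Rightarrow> nat set \<Rightarrow> bool" where
  "omega_adj A B \<longleftrightarrow> (\<exists>x\<in>A. B = A - {x}) \<or> (\<exists>x\<in>B. A = B - {x})"

definition hypercube_adj :: "nat set \<Rightarrow> nat set \<Rightarrow> bool" where
  "hypercube_adj a b \<longleftrightarrow> card ((a - b) \<union> (b - a)) = 1"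

definition q_count :: "nat \<Rightarrow> nat \<Rightarrow> nat" where
  "q_count n k = card {S. S \<subseteq> omega_vertices n \<and>
     (\<exists>f. bij_betw f (Pow {..<k}) S \<and>
          (\<forall>a\<in>Pow {..<k}. \<forall>b\<in>Pow {..<k}. omega_adj (f a) (f b) \<longleftrightarrow> hypercube_adj a b))}"

end

theory Submission
  imports Defs
begin


definition up :: "nat \<Rightarrow> bool" where "up i \<longleftrightarrow> 3 \<le> i \<and> odd i"

lemma xi_cover_iff: "xi_cover n i j \<longleftrightarrow>
   (1 \<le> i \<and> j = Suc i \<and> j \<le> n \<and> up i) \<or> (1 \<le> j \<and> i = Suc j \<and> i \<le> n \<and> \<not> up j)"
proof
  assume "xi_cover n i j" then show "(1 \<le> i \<and> j = Suc i \<and> j \<le> n \<and> up i) \<or> (1 \<le> j \<and> i = Suc j \<and> i \<le> n \<and> \<not> up j)"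
    unfolding xi_cover_def up_def by auto
next
  assume h: "(1 \<le> i \<and> j = Suc i \<and> j \<le> n \<and> up i) \<or> (1 \<le> j \<and> i = Suc j \<and> i \<le> n \<and> \<not> up j)"
  show "xi_cover n i j"
  proof (cases "1 \<le> i \<and> j = Suc i \<and> j \<le> n \<and> up i")
    case True then show ?thesis unfolding xi_cover_def up_def
      by (intro disjI2 exI[of _ i]) auto
  next
    case False
    with h have h2: "1 \<le> j" "i = Suc j" "i \<le> n" "\<not> up j" by auto
    consider "j = 1" | "j = 2" | "j \<ge> 3" using h2 by linarith
    then show ?thesis
    proof cases
      case 3 then show ?thesis using h2 unfolding xi_cover_def up_def
        by (intro disjI2 exI[of _ j]) auto
    qed (use h2 in \<open>auto simp: xi_cover_def\<close>)
  qed
qed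

definition P :: "nat \<Rightarrow> nat set \<Rightarrow> bool" where
  "P n F \<longleftrightarrow> (\<forall>i. 1 \<le> i \<longrightarrow> Suc i \<le> n \<longrightarrow>
      (up i \<longrightarrow> i \<in> F \<longrightarrow> Suc i \<in> F) \<and> (\<not> up i \<longrightarrow> Suc i \<in> F \<longrightarrow> i \<in> F))"

lemma P_cover: "P n F \<longleftrightarrow> (\<forall>i j. xi_cover n i j \<longrightarrow> i \<in> F \<longrightarrow> j \<in> F)"
  unfolding P_def xi_cover_iff by auto

lemma xi_filter_iff: "xi_filter n F \<longleftrightarrow> F \<subseteq> {1..n} \<and> P n F"
proof
  assume h: "xi_filter n F"
  have "P n F" unfolding P_cover
  proof (intro allI impI)
    fix i j assume c: "xi_cover n i j" "i \<in> F"
    have "j \<in> {1..n}" using c(1) unfolding xi_cover_iff by auto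
    moreover have "xi_le n i j" unfolding xi_le_def using c(1) by auto
    ultimately show "j \<in> F" using h c(2) unfolding xi_filter_def by blast
  qed
  then show "F \<subseteq> {1..n} \<and> P n F" using h unfolding xi_filter_def by auto
next
  assume h: "F \<subseteq> {1..n} \<and> P n F"
  have "y \<in> F" if "xi_le n x y" "x \<in> F" for x y
    using that(1)[unfolded xi_le_def] that(2)
  proof (induction rule: rtranclp_induct)
    case base then show ?case .
  next
    case (step y z) then show ?case using h unfolding P_cover by blast
  qed
  then show "xi_filter n F" using h unfolding xi_filter_def by blast
qed


lemma P_Suc: "P (Suc n) F \<longleftrightarrow> P n F \<and> (1 \<le> n \<longrightarrow> (up n \<longrightarrow> n \<in> F \<longrightarrow> Suc n \<in> F) \<and> (\<not> up n \<longrightarrow> Suc n \<in> F \<longrightarrow> n \<in> F))"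
proof
  assume "P (Suc n) F" then show "P n F \<and> (1 \<le> n \<longrightarrow> (up n \<longrightarrow> n \<in> F \<longrightarrow> Suc n \<in> F) \<and> (\<not> up n \<longrightarrow> Suc n \<in> F \<longrightarrow> n \<in> F))"
    unfolding P_def by (meson le_SucI order_refl)
next
  assume h: "P n F \<and> (1 \<le> n \<longrightarrow> (up n \<longrightarrow> n \<in> F \<longrightarrow> Suc n \<in> F) \<and> (\<not> up n \<longrightarrow> Suc n \<in> F \<longrightarrow> n \<in> F))"
  show "P (Suc n) F" unfolding P_def
  proof (intro allI impI)
    fix i assume i: "1 \<le> i" "Suc i \<le> Suc n"
    show "(up i \<longrightarrow> i \<in> F \<longrightarrow> Suc i \<in> F) \<and> (\<not> up i \<longrightarrow> Suc i \<in> F \<longrightarrow> i \<in> F)"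
    proof (cases "i = n")
      case True then show ?thesis using h i by blast
    next
      case False then have "Suc i \<le> n" using i by linarith
      then show ?thesis using h i unfolding P_def by blast
    qed
  qed
qed

lemma P_cong: "(\<And>i. i \<le> n \<Longrightarrow> i \<in> F \<longleftrightarrow> i \<in> G) \<Longrightarrow> P n F = P n G"
proof -
  assume a: "\<And>i. i \<le> n \<Longrightarrow> i \<in> F \<longleftrightarrow> i \<in> G"
  have h: "Suc i \<le> n \<Longrightarrow> (i \<in> F \<longleftrightarrow> i \<in> G) \<and> (Suc i \<in> F \<longleftrightarrow> Suc i \<in> G)" for i
    using a[of i] a[of "Suc i"] by simp
  show ?thesis unfolding P_def
  proof (intro iffI allI impI)
    fix i assume "\<forall>i\<ge>1. Suc i \<le> n \<longrightarrow> (up i \<longrightarrow> i \<in> F \<longrightarrow> Suc i \<in> F) \<and> (\<not> up i \<longrightarrow> Suc i \<in> F \<longrightarrow> i \<in> F)"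
      "1 \<le> i" "Suc i \<le> n"
    then show "(up i \<longrightarrow> i \<in> G \<longrightarrow> Suc i \<in> G) \<and> (\<not> up i \<longrightarrow> Suc i \<in> G \<longrightarrow> i \<in> G)"
      using h[of i] by blast
  next
    fix i assume "\<forall>i\<ge>1. Suc i \<le> n \<longrightarrow> (up i \<longrightarrow> i \<in> G \<longrightarrow> Suc i \<in> G) \<and> (\<not> up i \<longrightarrow> Suc i \<in> G \<longrightarrow> i \<in> G)"
      "1 \<le> i" "Suc i \<le> n"
    then show "(up i \<longrightarrow> i \<in> F \<longrightarrow> Suc i \<in> F) \<and> (\<not> up i \<longrightarrow> Suc i \<in> F \<longrightarrow> i \<in> F)"
      using h[of i] by blast
  qed
qed

lemma P_insert_big: "n < m \<Longrightarrow> P n (insert m F) = P n F"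
  by (rule P_cong) auto

lemma P_remove_big: "n < m \<Longrightarrow> P n (F - {m}) = P n F"
  by (rule P_cong) auto

definition ad :: "nat \<Rightarrow> nat set \<Rightarrow> nat set" where
  "ad n F = {e \<in> {1..n}. e \<notin> F \<and> xi_filter n (insert e F)}"

lemma ov_iff: "F \<in> omega_vertices n \<longleftrightarrow> F \<subseteq> {1..n} \<and> P n F"
  unfolding omega_vertices_def xi_filter_iff by simp

lemma finite_ov: "finite (omega_vertices n)"
  by (rule finite_subset[of _ "Pow {1..n}"]) (use ov_iff in blast)+

lemma finite_ad: "finite (ad n F)" unfolding ad_def by auto

lemma ad_sub: "ad n F \<subseteq> {1..n}" unfolding ad_def by auto

lemma ad_mem: "e \<in> ad n F \<longleftrightarrow> e \<notin> F \<and> insert e F \<subseteq> {1..n} \<and> P n (insert e F)"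
  unfolding ad_def xi_filter_iff by auto

lemma ad_Suc_mem: "e \<in> ad (Suc n) F \<longleftrightarrow> e \<notin> F \<and> insert e F \<subseteq> {1..Suc n} \<and> P n (insert e F) \<and>
   (1 \<le> n \<longrightarrow> (up n \<longrightarrow> n \<in> insert e F \<longrightarrow> Suc n \<in> insert e F) \<and> (\<not> up n \<longrightarrow> Suc n \<in> insert e F \<longrightarrow> n \<in> insert e F))"
  unfolding ad_def xi_filter_iff P_Suc by auto

lemma lowL1:
  assumes "\<not> up n" "1 \<le> n"
  shows "omega_vertices (Suc n) = omega_vertices n \<union> insert (Suc n) ` {G \<in> omega_vertices n. n \<in> G}"
proof (intro set_eqI iffI)
  fix F assume "F \<in> omega_vertices (Suc n)"
  then have F: "F \<subseteq> {1..Suc n}" "P n F" "Suc n \<in> F \<longrightarrow> n \<in> F" using assms by (auto simp: ov_iff P_Suc)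
  show "F \<in> omega_vertices n \<union> insert (Suc n) ` {G \<in> omega_vertices n. n \<in> G}"
  proof (cases "Suc n \<in> F")
    case True
    then have e: "F = insert (Suc n) (F - {Suc n})" by auto
    have s: "F - {Suc n} \<subseteq> {1..n}"
    proof
      fix x assume "x \<in> F - {Suc n}"
      then have "x \<in> {1..Suc n}" "x \<noteq> Suc n" using F(1) by auto
      then show "x \<in> {1..n}" by auto
    qed
    have m: "F - {Suc n} \<in> omega_vertices n" unfolding ov_iff P_remove_big[OF lessI] using s F(2) by blast
    have "n \<in> F - {Suc n}" using F(3) True by simp
    then have "F \<in> insert (Suc n) ` {G \<in> omega_vertices n. n \<in> G}"
      using m by (subst e) (rule imageI, simp)
    then show ?thesis by (rule UnI2)
  next
    case False
    have "F \<subseteq> {1..n}"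
    proof
      fix x assume "x \<in> F"
      then have "x \<in> {1..Suc n}" "x \<noteq> Suc n" using F(1) False by auto
      then show "x \<in> {1..n}" by auto
    qed
    then show ?thesis using F False by (auto simp: ov_iff)
  qed
next
  fix F assume "F \<in> omega_vertices n \<union> insert (Suc n) ` {G \<in> omega_vertices n. n \<in> G}"
  then show "F \<in> omega_vertices (Suc n)"
  proof
    assume "F \<in> omega_vertices n"
    then show ?thesis using assms unfolding ov_iff P_Suc by auto
  next
    assume "F \<in> insert (Suc n) ` {G \<in> omega_vertices n. n \<in> G}"
    then obtain G where G: "F = insert (Suc n) G" "G \<subseteq> {1..n}" "P n G" "n \<in> G" unfolding ov_iff by auto
    show ?thesis unfolding ov_iff P_Suc G(1) P_insert_big[OF lessI] using G assms by auto
  qed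
qed

lemma lowL2:
  assumes "\<not> up n" "1 \<le> n" "G \<in> omega_vertices n"
  shows "ad (Suc n) G = ad n G \<union> (if n \<in> G then {Suc n} else {})"
proof (rule set_eqI)
  fix e
  have G: "G \<subseteq> {1..n}" "P n G" using assms(3) by (auto simp: ov_iff)
  have ns: "Suc n \<notin> G" "Suc n \<notin> ad n G" using G(1) ad_sub[of n G] by auto
  show "e \<in> ad (Suc n) G \<longleftrightarrow> e \<in> ad n G \<union> (if n \<in> G then {Suc n} else {})"
  proof (cases "e = Suc n")
    case True
    show ?thesis using G ns assms(1,2) unfolding True ad_Suc_mem P_insert_big[OF lessI] by auto
  next
    case False
    have "insert e G \<subseteq> {1..Suc n} \<longleftrightarrow> insert e G \<subseteq> {1..n}" using G(1) False by auto
    then show ?thesis using G ns False assms(1,2) unfolding ad_Suc_mem Un_iff Diff_iff ad_mem[of e n G] singleton_iff by (simp; blast)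
  qed
qed

lemma lowL3:
  assumes "\<not> up n" "1 \<le> n" "G \<in> omega_vertices n" "n \<in> G"
  shows "ad (Suc n) (insert (Suc n) G) = ad n G"
proof (rule set_eqI)
  fix e
  have G: "G \<subseteq> {1..n}" "P n G" using assms(3) by (auto simp: ov_iff)
  have ns: "Suc n \<notin> G" "Suc n \<notin> ad n G" using G(1) ad_sub[of n G] by auto
  show "e \<in> ad (Suc n) (insert (Suc n) G) \<longleftrightarrow> e \<in> ad n G"
  proof (cases "e = Suc n")
    case True
    then show ?thesis using ns by (simp add: ad_Suc_mem)
  next
    case False
    have "insert e (insert (Suc n) G) \<subseteq> {1..Suc n} \<longleftrightarrow> insert e G \<subseteq> {1..n}" using G(1) False by auto
    moreover have "P n (insert e (insert (Suc n) G)) = P n (insert e G)"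
      by (subst insert_commute) (rule P_insert_big[OF lessI])
    ultimately show ?thesis using G ns False assms unfolding ad_Suc_mem Un_iff Diff_iff ad_mem[of e n G] singleton_iff by (simp; blast)
  qed
qed

lemma upU1:
  assumes "up n" "1 \<le> n"
  shows "omega_vertices (Suc n) = insert (Suc n) ` omega_vertices n \<union> {G \<in> omega_vertices n. n \<notin> G}"
proof (intro set_eqI iffI)
  fix F assume "F \<in> omega_vertices (Suc n)"
  then have F: "F \<subseteq> {1..Suc n}" "P n F" "n \<in> F \<longrightarrow> Suc n \<in> F" using assms by (auto simp: ov_iff P_Suc)
  show "F \<in> insert (Suc n) ` omega_vertices n \<union> {G \<in> omega_vertices n. n \<notin> G}"
  proof (cases "Suc n \<in> F")
    case True
    then have e: "F = insert (Suc n) (F - {Suc n})" by auto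
    have s: "F - {Suc n} \<subseteq> {1..n}"
    proof
      fix x assume "x \<in> F - {Suc n}"
      then have "x \<in> {1..Suc n}" "x \<noteq> Suc n" using F(1) by auto
      then show "x \<in> {1..n}" by auto
    qed
    have m: "F - {Suc n} \<in> omega_vertices n" unfolding ov_iff P_remove_big[OF lessI] using s F(2) by blast
    have "F \<in> insert (Suc n) ` omega_vertices n"
      using m by (subst e) (rule imageI)
    then show ?thesis by (rule UnI1)
  next
    case False
    have "F \<subseteq> {1..n}"
    proof
      fix x assume "x \<in> F"
      then have "x \<in> {1..Suc n}" "x \<noteq> Suc n" using F(1) False by auto
      then show "x \<in> {1..n}" by auto
    qed
    then have "F \<in> omega_vertices n" using F(2) unfolding ov_iff by blast
    moreover have "n \<notin> F" using F(3) False by blast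
    ultimately show ?thesis by (intro UnI2) simp
  qed
next
  fix F assume "F \<in> insert (Suc n) ` omega_vertices n \<union> {G \<in> omega_vertices n. n \<notin> G}"
  then show "F \<in> omega_vertices (Suc n)"
  proof
    assume "F \<in> {G \<in> omega_vertices n. n \<notin> G}"
    then have h: "F \<subseteq> {1..n}" "P n F" "n \<notin> F" unfolding ov_iff by auto
    then have "Suc n \<notin> F" "F \<subseteq> {1..Suc n}" by auto
    then show ?thesis using h unfolding ov_iff P_Suc by blast
  next
    assume "F \<in> insert (Suc n) ` omega_vertices n"
    then obtain G where G: "F = insert (Suc n) G" "G \<in> omega_vertices n" by blast
    then have G2: "G \<subseteq> {1..n}" "P n G" unfolding ov_iff by auto
    then have "insert (Suc n) G \<subseteq> {1..Suc n}" by auto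
    then show ?thesis unfolding ov_iff P_Suc G(1) P_insert_big[OF lessI] using G2 assms by blast
  qed
qed

lemma upU2:
  assumes "up n" "1 \<le> n" "G \<in> omega_vertices n"
  shows "ad (Suc n) (insert (Suc n) G) = ad n G"
proof (rule set_eqI)
  fix e
  have G: "G \<subseteq> {1..n}" "P n G" using assms(3) by (auto simp: ov_iff)
  have ns: "Suc n \<notin> G" "Suc n \<notin> ad n G" using G(1) ad_sub[of n G] by auto
  show "e \<in> ad (Suc n) (insert (Suc n) G) \<longleftrightarrow> e \<in> ad n G"
  proof (cases "e = Suc n")
    case True
    then show ?thesis using ns by (simp add: ad_Suc_mem)
  next
    case False
    have "insert e (insert (Suc n) G) \<subseteq> {1..Suc n} \<longleftrightarrow> insert e G \<subseteq> {1..n}" using G(1) False by auto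
    moreover have "P n (insert e (insert (Suc n) G)) = P n (insert e G)"
      by (subst insert_commute) (rule P_insert_big[OF lessI])
    ultimately show ?thesis using G ns False assms unfolding ad_Suc_mem Un_iff Diff_iff ad_mem[of e n G] singleton_iff by (simp; blast)
  qed
qed

lemma upU3:
  assumes "up n" "1 \<le> n" "G \<in> omega_vertices n" "n \<notin> G"
  shows "ad (Suc n) G = (ad n G - {n}) \<union> {Suc n}"
proof (rule set_eqI)
  fix e
  have G: "G \<subseteq> {1..n}" "P n G" using assms(3) by (auto simp: ov_iff)
  have ns: "Suc n \<notin> G" "Suc n \<notin> ad n G" using G(1) ad_sub[of n G] by auto
  show "e \<in> ad (Suc n) G \<longleftrightarrow> e \<in> (ad n G - {n}) \<union> {Suc n}"
  proof (cases "e = Suc n")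
    case True
    show ?thesis using G ns assms unfolding True ad_Suc_mem P_insert_big[OF lessI] by auto
  next
    case False
    have "insert e G \<subseteq> {1..Suc n} \<longleftrightarrow> insert e G \<subseteq> {1..n}" using G(1) False by auto
    then show ?thesis using G ns False assms unfolding ad_Suc_mem Un_iff Diff_iff ad_mem[of e n G] singleton_iff by (simp; blast)
  qed
qed


definition sd :: "'a set \<Rightarrow> 'a set \<Rightarrow> 'a set" where "sd X Y = (X - Y) \<union> (Y - X)"

lemma omega_adj_sd: "omega_adj X Y \<longleftrightarrow> (\<exists>x. sd X Y = {x})"
proof
  assume "omega_adj X Y"
  then show "\<exists>x. sd X Y = {x}" unfolding omega_adj_def sd_def by blast
next
  assume "\<exists>x. sd X Y = {x}"
  then obtain x where x: "sd X Y = {x}" by blast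
  show "omega_adj X Y"
  proof (cases "x \<in> X")
    case True
    then have "Y = X - {x}" using x unfolding sd_def by blast
    then show ?thesis unfolding omega_adj_def using True by blast
  next
    case False
    have xm: "x \<in> sd X Y" using x by simp
    have "x \<in> Y" using xm False unfolding sd_def by blast
    moreover have "X = Y - {x}"
    proof (rule set_eqI)
      fix z show "z \<in> X \<longleftrightarrow> z \<in> Y - {x}"
        using x False unfolding sd_def set_eq_iff by (cases "z = x") auto
    qed
    ultimately show ?thesis unfolding omega_adj_def by blast
  qed
qed

lemma hyp_sd: "hypercube_adj a b \<longleftrightarrow> (\<exists>x. sd a b = {x})"
  unfolding hypercube_adj_def sd_def by (simp add: card_1_singleton_iff)

lemma sd_ins: "b \<notin> E \<Longrightarrow> sd X (insert b E) = sd (sd X E) {b}"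
  unfolding sd_def by auto

lemma sd_swap: "sd (sd Y Z) W = sd (sd Y W) Z"
  unfolding sd_def by auto

lemma sd_two: "b \<noteq> c \<Longrightarrow> sd Y {b, c} = sd (sd Y {c}) {b}"
  unfolding sd_def by auto

lemma sd_single: "sd D {a} = {p} \<Longrightarrow> (p = a \<and> D = {}) \<or> (p \<noteq> a \<and> D = {a, p})"
  unfolding sd_def by (cases "p = a") blast+

lemma cube_embed:
  fixes f :: "nat set \<Rightarrow> 'a set"
  assumes inj: "inj_on f (Pow {..<k})"
    and adj: "\<And>a b. a \<subseteq> {..<k} \<Longrightarrow> b \<subseteq> {..<k} \<Longrightarrow> (\<exists>x. sd (f a) (f b) = {x}) \<longleftrightarrow> (\<exists>x. sd a b = {x})"
  shows "\<exists>e. inj_on e {..<k} \<and> (\<forall>a. a \<subseteq> {..<k} \<longrightarrow> f a = sd (f {}) (e ` a))"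
proof -
  define X where "X = f {}"
  have ex: "\<exists>x. sd X (f {i}) = {x}" if "i < k" for i
    using adj[of "{}" "{i}"] that unfolding X_def sd_def by auto
  define e where "e i = (SOME x. sd X (f {i}) = {x})" for i
  have e: "sd X (f {i}) = {e i}" if "i < k" for i
    using someI_ex[OF ex[OF that]] unfolding e_def .
  have fi: "f {i} = sd X {e i}" if "i < k" for i
    using e[OF that] unfolding sd_def by blast
  have einj: "inj_on e {..<k}"
  proof (rule inj_onI)
    fix i j assume ij: "i \<in> {..<k}" "j \<in> {..<k}" "e i = e j"
    then have "f {i} = f {j}" using fi by auto
    then have "{i} = {j}" using inj ij unfolding inj_on_def by auto
    then show "i = j" by auto
  qed
  have main: "\<forall>a. card a = m \<longrightarrow> a \<subseteq> {..<k} \<longrightarrow> f a = sd X (e ` a)" for m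
  proof (induction m rule: less_induct)
    case (less m)
    show ?case
    proof (intro allI impI)
      fix a assume am: "card a = m" "a \<subseteq> {..<k}"
      have fa: "finite a" using am(2) finite_subset by blast
      consider "a = {}" | i where "a = {i}" | i j where "i \<in> a" "j \<in> a" "i \<noteq> j"
        by (metis insertI1 is_singletonI' is_singleton_the_elem)
      then show "f a = sd X (e ` a)"
      proof cases
        case 1 then show ?thesis unfolding X_def sd_def by simp
      next
        case (2 i) then show ?thesis using fi am(2) by simp
      next
        case (3 i j)
        define a0 where "a0 = a - {i, j}"
        have a1e: "a - {j} = insert i a0" and a2e: "a - {i} = insert j a0" and ae: "a = insert i (insert j a0)"
          using 3 unfolding a0_def by auto
        have ij: "i < k" "j < k" using 3 am(2) by auto
        have ni: "i \<notin> a0" "j \<notin> a0" unfolding a0_def by auto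
        have sub: "a0 \<subseteq> {..<k}" unfolding a0_def using am(2) by auto
        have c1: "card (a - {j}) < m" "card (a - {i}) < m" "card a0 < m"
        proof -
          show "card (a - {j}) < m" using card_Diff1_less[OF fa 3(2)] am(1) by simp
          show "card (a - {i}) < m" using card_Diff1_less[OF fa 3(1)] am(1) by simp
          have "a0 \<subset> a" unfolding a0_def using 3 by auto
          then show "card a0 < m" using psubset_card_mono[OF fa] am(1) by simp
        qed
        have Y1: "f (a - {j}) = sd X (e ` (a - {j}))" using less[OF c1(1)] am(2) by auto
        have Y2: "f (a - {i}) = sd X (e ` (a - {i}))" using less[OF c1(2)] am(2) by auto
        have Y0: "f a0 = sd X (e ` a0)" using less[OF c1(3)] sub by auto
        have eni: "e i \<notin> e ` a0" "e j \<notin> e ` a0" "e i \<noteq> e j"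
          using ni ij sub einj 3(3) unfolding inj_on_def by auto
        define D where "D = sd (f a0) (f a)"
        have fa_eq: "f a = sd (f a0) D" unfolding D_def sd_def by blast
        have D1: "sd D {e i} = sd (f (a - {j})) (f a)"
          unfolding D_def Y1 Y0 unfolding a1e image_insert sd_ins[OF eni(1)] by (rule sd_swap)
        have D2: "sd D {e j} = sd (f (a - {i})) (f a)"
          unfolding D_def Y2 Y0 unfolding a2e image_insert sd_ins[OF eni(2)] by (rule sd_swap)
        have "sd (a - {j}) a = {j}" using 3 unfolding sd_def by auto
        then obtain p where p: "sd D {e i} = {p}"
          using adj[of "a - {j}" a] am(2) unfolding D1 by blast
        have "sd (a - {i}) a = {i}" using 3 unfolding sd_def by auto
        then obtain q where q: "sd D {e j} = {q}"
          using adj[of "a - {i}" a] am(2) unfolding D2 by blast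
        have "a0 \<noteq> a" unfolding a0_def using 3 by auto
        then have "f a0 \<noteq> f a" using inj sub am(2) unfolding inj_on_def by blast
        then have "D \<noteq> {}" unfolding D_def sd_def by blast
        then have "D = {e i, p}" "D = {e j, q}" using sd_single[OF p] sd_single[OF q] by auto
        then have "D = {e i, e j}" using eni(3) by auto
        have "e j \<notin> insert (e i) (e ` a0)" using eni by auto
        then have "sd X (e ` a) = sd (sd (sd X (e ` a0)) {e i}) {e j}"
          unfolding ae image_insert insert_commute[of "e i"] using sd_ins eni by metis
        also have "\<dots> = sd (f a0) D" unfolding Y0 \<open>D = {e i, e j}\<close> sd_two[OF eni(3)] using sd_swap by metis
        finally show ?thesis using fa_eq by simp
      qed
    qed
  qed
  show ?thesis using einj main unfolding X_def by blast
qed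


lemma filter_union: "xi_filter n A \<Longrightarrow> xi_filter n B \<Longrightarrow> xi_filter n (A \<union> B)"
  unfolding xi_filter_def by blast

definition cube :: "nat set \<Rightarrow> nat set \<Rightarrow> nat set set" where
  "cube B E = (\<lambda>T. B \<union> T) ` Pow E"

lemma ov_def2: "F \<in> omega_vertices n \<longleftrightarrow> xi_filter n F"
  unfolding omega_vertices_def by simp

lemma cube_in_V:
  assumes B: "B \<in> omega_vertices n" and E: "E \<subseteq> ad n B"
  shows "cube B E \<subseteq> omega_vertices n"
proof -
  have fE: "finite E" using E finite_ad finite_subset by blast
  have "T \<subseteq> E \<longrightarrow> B \<union> T \<in> omega_vertices n" for T
  proof (induction T rule: infinite_finite_induct)
    case (infinite T) then show ?case using fE finite_subset by blast
  next
    case empty then show ?case using B by simp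
  next
    case (insert x T)
    show ?case
    proof
      assume "insert x T \<subseteq> E"
      then have "B \<union> T \<in> omega_vertices n" "x \<in> ad n B" using insert E by auto
      then have "xi_filter n (B \<union> T)" "xi_filter n (insert x B)" unfolding ov_def2 ad_def by auto
      then have "xi_filter n (insert x B \<union> (B \<union> T))" using filter_union by blast
      moreover have "insert x B \<union> (B \<union> T) = B \<union> insert x T" by auto
      ultimately show "B \<union> insert x T \<in> omega_vertices n" unfolding ov_def2 by simp
    qed
  qed
  then show ?thesis unfolding cube_def by auto
qed

definition Qs :: "nat \<Rightarrow> nat \<Rightarrow> nat set set set" where
  "Qs n k = {S. S \<subseteq> omega_vertices n \<and>
     (\<exists>f. bij_betw f (Pow {..<k}) S \<and>
          (\<forall>a\<in>Pow {..<k}. \<forall>b\<in>Pow {..<k}. omega_adj (f a) (f b) \<longleftrightarrow> hypercube_adj a b))}"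

definition Pairs :: "nat \<Rightarrow> nat \<Rightarrow> (nat set \<times> nat set) set" where
  "Pairs n k = {(B, E). B \<in> omega_vertices n \<and> E \<subseteq> ad n B \<and> card E = k}"

lemma ad_disj: "E \<subseteq> ad n B \<Longrightarrow> B \<inter> E = {}"
  unfolding ad_def by auto

lemma sd_cube: "(\<lambda>T. sd X T) ` Pow E = (\<lambda>T. (X - E) \<union> T) ` Pow E"
proof (intro set_eqI iffI)
  fix Y assume "Y \<in> (\<lambda>T. sd X T) ` Pow E"
  then obtain T where T: "T \<subseteq> E" "Y = sd X T" by auto
  have "Y = (X - E) \<union> sd (X \<inter> E) T" using T unfolding sd_def by auto
  moreover have "sd (X \<inter> E) T \<subseteq> E" using T unfolding sd_def by auto
  ultimately show "Y \<in> (\<lambda>T. (X - E) \<union> T) ` Pow E" by blast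
next
  fix Y assume "Y \<in> (\<lambda>T. (X - E) \<union> T) ` Pow E"
  then obtain T where T: "T \<subseteq> E" "Y = (X - E) \<union> T" by auto
  have "Y = sd X (sd (X \<inter> E) T)" using T unfolding sd_def by auto
  moreover have "sd (X \<inter> E) T \<subseteq> E" using T unfolding sd_def by auto
  ultimately show "Y \<in> (\<lambda>T. sd X T) ` Pow E" by blast
qed

lemma Qs_sub: "Qs n k \<subseteq> (\<lambda>(B, E). cube B E) ` Pairs n k"
proof
  fix S assume "S \<in> Qs n k"
  then obtain f where S: "S \<subseteq> omega_vertices n" and bij: "bij_betw f (Pow {..<k}) S"
    and adj: "\<forall>a\<in>Pow {..<k}. \<forall>b\<in>Pow {..<k}. omega_adj (f a) (f b) \<longleftrightarrow> hypercube_adj a b"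
    unfolding Qs_def by blast
  have inj: "inj_on f (Pow {..<k})" and Sim: "S = f ` Pow {..<k}" using bij unfolding bij_betw_def by auto
  have adj2: "(\<exists>x. sd (f a) (f b) = {x}) \<longleftrightarrow> (\<exists>x. sd a b = {x})" if "a \<subseteq> {..<k}" "b \<subseteq> {..<k}" for a b
    using adj that unfolding omega_adj_sd hyp_sd by blast
  obtain e where einj: "inj_on e {..<k}" and fe: "\<forall>a. a \<subseteq> {..<k} \<longrightarrow> f a = sd (f {}) (e ` a)"
    using cube_embed[OF inj adj2] by blast
  define X where "X = f {}"
  define E where "E = e ` {..<k}"
  define B where "B = X - E"
  have cardE: "card E = k" unfolding E_def using card_image[OF einj] by simp
  have "S = (\<lambda>a. sd X (e ` a)) ` Pow {..<k}" unfolding Sim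
  proof (rule image_cong[OF refl])
    fix a assume "a \<in> Pow {..<k}"
    then have "a \<subseteq> {..<k}" by simp
    then show "f a = sd X (e ` a)" unfolding X_def by (rule fe[rule_format])
  qed
  also have "\<dots> = (\<lambda>T. sd X T) ` ((\<lambda>a. e ` a) ` Pow {..<k})" by (simp add: image_image)
  also have "(\<lambda>a. e ` a) ` Pow {..<k} = Pow E" unfolding E_def by (rule image_Pow_surj) simp
  finally have Scube: "S = cube B E" unfolding cube_def B_def sd_cube .
  have BS: "B \<in> S" unfolding Scube cube_def by auto
  have Ead: "E \<subseteq> ad n B"
  proof
    fix x assume x: "x \<in> E"
    then have "insert x B \<in> S" unfolding Scube cube_def by auto
    then have "insert x B \<in> omega_vertices n" using S by auto
    then have "xi_filter n (insert x B)" "insert x B \<subseteq> {1..n}" unfolding ov_def2 xi_filter_def by auto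
    moreover have "x \<notin> B" unfolding B_def using x by auto
    ultimately show "x \<in> ad n B" unfolding ad_def by auto
  qed
  have "(B, E) \<in> Pairs n k" unfolding Pairs_def using BS S Ead cardE by auto
  then show "S \<in> (\<lambda>(B, E). cube B E) ` Pairs n k" using Scube by force
qed

lemma union_cancel: "B \<inter> E = {} \<Longrightarrow> X \<subseteq> E \<Longrightarrow> Y \<subseteq> E \<Longrightarrow> B \<union> X = B \<union> Y \<Longrightarrow> X = Y"
  by blast

lemma Qs_sup: "(\<lambda>(B, E). cube B E) ` Pairs n k \<subseteq> Qs n k"
proof
  fix S assume "S \<in> (\<lambda>(B, E). cube B E) ` Pairs n k"
  then obtain p where p: "p \<in> Pairs n k" "S = (\<lambda>(B, E). cube B E) p" by blast
  obtain B E where pBE: "p = (B, E)" by (cases p)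
  have S: "S = cube B E" using p(2) pBE by simp
  have B: "B \<in> omega_vertices n" and E: "E \<subseteq> ad n B" and cE: "card E = k"
    using p(1) pBE unfolding Pairs_def by auto
  have fE: "finite E" using E finite_ad finite_subset by blast
  have disj: "B \<inter> E = {}" using ad_disj[OF E] .
  obtain g where g: "bij_betw g {..<k} E" using finite_same_card_bij[of "{..<k}" E] fE cE by auto
  have ginj: "inj_on g {..<k}" and gim: "g ` {..<k} = E" using g unfolding bij_betw_def by auto
  define f where "f a = B \<union> g ` a" for a
  have finj: "inj_on f (Pow {..<k})"
  proof (rule inj_onI)
    fix a b assume ab: "a \<in> Pow {..<k}" "b \<in> Pow {..<k}" "f a = f b"
    have "g ` a = g ` b"
    proof -
    have "g ` a \<subseteq> E" "g ` b \<subseteq> E" using ab(1,2) gim by auto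
    moreover have "B \<union> g ` a = B \<union> g ` b" using ab(3) unfolding f_def .
    ultimately show "g ` a = g ` b" using disj union_cancel by metis
    qed
    then show "a = b" using inj_on_image_eq_iff[OF ginj] ab(1,2) by auto
  qed
  have fim: "f ` Pow {..<k} = S"
  proof -
    have "f ` Pow {..<k} = (\<lambda>T. B \<union> T) ` ((\<lambda>a. g ` a) ` Pow {..<k})" unfolding f_def by (simp add: image_image)
    also have "(\<lambda>a. g ` a) ` Pow {..<k} = Pow E" by (rule image_Pow_surj) (rule gim)
    finally show ?thesis unfolding S cube_def .
  qed
  have adj: "omega_adj (f a) (f b) \<longleftrightarrow> hypercube_adj a b" if ab: "a \<in> Pow {..<k}" "b \<in> Pow {..<k}" for a b
  proof -
    have "g ` a \<subseteq> E" "g ` b \<subseteq> E" using ab gim by auto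
    then have "sd (f a) (f b) = sd (g ` a) (g ` b)" using disj unfolding f_def sd_def by blast
    also have "\<dots> = g ` (sd a b)"
    proof -
      have "a \<subseteq> {..<k}" "b \<subseteq> {..<k}" using ab by auto
      then have "g ` (a - b) = g ` a - g ` b" "g ` (b - a) = g ` b - g ` a"
        by (auto intro!: inj_on_image_set_diff[OF ginj])
      then show ?thesis unfolding sd_def image_Un by simp
    qed
    finally have e1: "sd (f a) (f b) = g ` (sd a b)" .
    have sub: "sd a b \<subseteq> {..<k}" using ab unfolding sd_def by auto
    have "(\<exists>x. g ` (sd a b) = {x}) \<longleftrightarrow> (\<exists>x. sd a b = {x})"
    proof
      assume "\<exists>x. g ` (sd a b) = {x}"
      then obtain x where x: "g ` (sd a b) = {x}" by blast
      then have "x \<in> g ` (sd a b)" by simp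
      then obtain y where y: "y \<in> sd a b" "g y = x" by (rule imageE) simp
      have "sd a b = {y}"
      proof (rule set_eqI)
        fix z show "z \<in> sd a b \<longleftrightarrow> z \<in> {y}"
        proof
          assume z: "z \<in> sd a b"
          then have "g z = x" using x by auto
          then show "z \<in> {y}" using y z sub ginj unfolding inj_on_def by auto
        next
          assume "z \<in> {y}"
          then show "z \<in> sd a b" using y(1) by simp
        qed
      qed
      then show "\<exists>x. sd a b = {x}" by blast
    next
      assume "\<exists>x. sd a b = {x}"
      then show "\<exists>x. g ` (sd a b) = {x}" by auto
    qed
    then show ?thesis unfolding omega_adj_sd hyp_sd e1 .
  qed
  have "S \<subseteq> omega_vertices n" unfolding S using cube_in_V[OF B E] .
  moreover have "bij_betw f (Pow {..<k}) S" unfolding bij_betw_def using finj fim by blast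
  ultimately show "S \<in> Qs n k" unfolding Qs_def using adj by blast
qed

lemma cube_inj: "inj_on (\<lambda>(B, E). cube B E) (Pairs n k)"
proof (rule inj_onI)
  fix p1 p2 assume p: "p1 \<in> Pairs n k" "p2 \<in> Pairs n k" "(\<lambda>(B, E). cube B E) p1 = (\<lambda>(B, E). cube B E) p2"
  obtain B1 E1 where p1: "p1 = (B1, E1)" "E1 \<subseteq> ad n B1" using p(1) unfolding Pairs_def by auto
  obtain B2 E2 where p2: "p2 = (B2, E2)" "E2 \<subseteq> ad n B2" using p(2) unfolding Pairs_def by auto
  have eq: "cube B1 E1 = cube B2 E2" using p(3) p1 p2 by simp
  have d1: "B1 \<inter> E1 = {}" and d2: "B2 \<inter> E2 = {}" using ad_disj p1 p2 by auto
  have "B1 \<in> cube B2 E2" using eq unfolding cube_def by auto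
  then have s1: "B2 \<subseteq> B1" unfolding cube_def by auto
  have "B2 \<in> cube B1 E1" using eq unfolding cube_def by auto
  then have s2: "B1 \<subseteq> B2" unfolding cube_def by auto
  from s1 s2 have B: "B1 = B2" by (rule subset_antisym[rotated])
  have "\<Union>(cube B1 E1) = B1 \<union> E1" "\<Union>(cube B2 E2) = B2 \<union> E2" unfolding cube_def by auto
  then have "B1 \<union> E1 = B2 \<union> E2" using eq by simp
  then have "E1 = E2" using d1 d2 B by blast
  then show "p1 = p2" using p1 p2 B by simp
qed

lemma q_count_sum: "q_count n k = (\<Sum>B\<in>omega_vertices n. card (ad n B) choose k)"
proof -
  have "q_count n k = card (Qs n k)" unfolding q_count_def Qs_def ..
  also have "Qs n k = (\<lambda>(B, E). cube B E) ` Pairs n k" by (rule equalityI[OF Qs_sub Qs_sup])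
  also have "card \<dots> = card (Pairs n k)" by (rule card_image[OF cube_inj])
  also have "Pairs n k = Sigma (omega_vertices n) (\<lambda>B. {E. E \<subseteq> ad n B \<and> card E = k})"
    unfolding Pairs_def by auto
  also have "card \<dots> = (\<Sum>B\<in>omega_vertices n. card {E. E \<subseteq> ad n B \<and> card E = k})"
    by (rule card_SigmaI) (auto simp: finite_ov finite_ad)
  also have "\<dots> = (\<Sum>B\<in>omega_vertices n. card (ad n B) choose k)"
    by (rule sum.cong) (auto simp: n_subsets finite_ad)
  finally show ?thesis .
qed


definition S :: "nat \<Rightarrow> (nat \<Rightarrow> nat) \<Rightarrow> nat" where
  "S n g = (\<Sum>F\<in>omega_vertices n. g (card (ad n F)))"

lemma ov_notin: "G \<in> omega_vertices n \<Longrightarrow> n < m \<Longrightarrow> m \<notin> G"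
  unfolding ov_iff by auto

lemma sum_split: "finite A \<Longrightarrow> sum f A = sum f {x\<in>A. pr x} + sum f {x\<in>A. \<not> pr x}"
proof -
  assume fA: "finite A"
  have "A = {x\<in>A. pr x} \<union> {x\<in>A. \<not> pr x}" by auto
  then have "sum f A = sum f ({x\<in>A. pr x} \<union> {x\<in>A. \<not> pr x})" by simp
  also have "\<dots> = sum f {x\<in>A. pr x} + sum f {x\<in>A. \<not> pr x}"
    by (rule sum.union_disjoint) (use fA in auto)
  finally show ?thesis .
qed

lemma sum_insert_img:
  assumes "\<And>G. G \<in> A \<Longrightarrow> m \<notin> G"
  shows "(\<Sum>F\<in>insert m ` A. h F) = (\<Sum>G\<in>A. h (insert m G))"
proof -
  have "inj_on (insert m) A"
  proof (rule inj_onI)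
    fix x y assume "x \<in> A" "y \<in> A" "insert m x = insert m y"
    then show "x = y" using assms by (metis insert_ident)
  qed
  then show ?thesis by (simp add: sum.reindex)
qed

lemma caseA:
  assumes ev: "even n" and n2: "2 \<le> n"
  shows "(\<Sum>F\<in>{F\<in>omega_vertices (Suc (Suc n)). Suc (Suc n) \<in> F}. g (card (ad (Suc (Suc n)) F))) = S (Suc n) g"
    and "(\<Sum>F\<in>{F\<in>omega_vertices (Suc (Suc n)). Suc (Suc n) \<notin> F}. g (card (ad (Suc (Suc n)) F))) = S n (\<lambda>m. g (Suc m))"
proof -
  have u1: "up (Suc n)" and u0: "\<not> up n" and n1: "1 \<le> n" "1 \<le> Suc n" using ev n2 unfolding up_def by auto
  note U1 = upU1[OF u1 n1(2)]
  note L1 = lowL1[OF u0 n1(1)]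
  have s1: "{F\<in>omega_vertices (Suc (Suc n)). Suc (Suc n) \<in> F} = insert (Suc (Suc n)) ` omega_vertices (Suc n)"
    unfolding U1 using ov_notin[of _ "Suc n" "Suc (Suc n)"] by auto
  show "(\<Sum>F\<in>{F\<in>omega_vertices (Suc (Suc n)). Suc (Suc n) \<in> F}. g (card (ad (Suc (Suc n)) F))) = S (Suc n) g"
    unfolding s1 S_def
    by (subst sum_insert_img) (auto intro!: sum.cong simp: ov_notin upU2[OF u1 n1(2)])
  have s2: "{F\<in>omega_vertices (Suc (Suc n)). Suc (Suc n) \<notin> F} = omega_vertices n"
  proof -
    have "{F\<in>omega_vertices (Suc (Suc n)). Suc (Suc n) \<notin> F} = {G \<in> omega_vertices (Suc n). Suc n \<notin> G}"
      unfolding U1 using ov_notin[of _ "Suc n" "Suc (Suc n)"] by auto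
    also have "\<dots> = omega_vertices n"
      unfolding L1 using ov_notin[of _ n "Suc n"] by auto
    finally show ?thesis .
  qed
  have ad2: "card (ad (Suc (Suc n)) G) = Suc (card (ad n G))" if G: "G \<in> omega_vertices n" for G
  proof -
    have G1: "G \<in> omega_vertices (Suc n)" "Suc n \<notin> G" using G ov_notin[OF G, of "Suc n"] unfolding L1 by auto
    have "ad (Suc (Suc n)) G = (ad (Suc n) G - {Suc n}) \<union> {Suc (Suc n)}" by (rule upU3[OF u1 n1(2) G1])
    also have "ad (Suc n) G - {Suc n} = ad n G"
      using lowL2[OF u0 n1(1) G] ad_sub[of n G] by auto
    finally have "ad (Suc (Suc n)) G = insert (Suc (Suc n)) (ad n G)" by simp
    moreover have "Suc (Suc n) \<notin> ad n G" using ad_sub[of n G] by auto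
    ultimately show ?thesis using finite_ad[of n G] by simp
  qed
  show "(\<Sum>F\<in>{F\<in>omega_vertices (Suc (Suc n)). Suc (Suc n) \<notin> F}. g (card (ad (Suc (Suc n)) F))) = S n (\<lambda>m. g (Suc m))"
    unfolding s2 S_def by (rule sum.cong) (auto simp: ad2)
qed

lemma caseA_full:
  assumes "even n" "2 \<le> n"
  shows "S (Suc (Suc n)) g = S (Suc n) g + S n (\<lambda>m. g (Suc m))"
proof -
  have "S (Suc (Suc n)) g = (\<Sum>F\<in>{F\<in>omega_vertices (Suc (Suc n)). Suc (Suc n) \<in> F}. g (card (ad (Suc (Suc n)) F)))
     + (\<Sum>F\<in>{F\<in>omega_vertices (Suc (Suc n)). Suc (Suc n) \<notin> F}. g (card (ad (Suc (Suc n)) F)))"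
    unfolding S_def by (rule sum_split[OF finite_ov])
  then show ?thesis using caseA[OF assms] by simp
qed

lemma lowSum:
  assumes u0: "\<not> up n" and n1: "1 \<le> n"
  shows "S (Suc n) g = (\<Sum>G\<in>omega_vertices n. g (card (ad n G) + (if n \<in> G then 1 else 0)))
     + (\<Sum>G\<in>{G\<in>omega_vertices n. n \<in> G}. g (card (ad n G)))"
proof -
  note L1 = lowL1[OF u0 n1]
  have disj: "omega_vertices n \<inter> insert (Suc n) ` {G \<in> omega_vertices n. n \<in> G} = {}"
    using ov_notin[of _ n "Suc n"] by auto
  have "S (Suc n) g = (\<Sum>F\<in>omega_vertices n. g (card (ad (Suc n) F)))
      + (\<Sum>F\<in>insert (Suc n) ` {G \<in> omega_vertices n. n \<in> G}. g (card (ad (Suc n) F)))"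
    unfolding S_def L1 by (rule sum.union_disjoint) (auto simp: finite_ov disj)
  also have "(\<Sum>F\<in>omega_vertices n. g (card (ad (Suc n) F))) = (\<Sum>G\<in>omega_vertices n. g (card (ad n G) + (if n \<in> G then 1 else 0)))"
  proof (rule sum.cong)
    fix G assume G: "G \<in> omega_vertices n"
    have "Suc n \<notin> ad n G" using ad_sub[of n G] by auto
    then show "g (card (ad (Suc n) G)) = g (card (ad n G) + (if n \<in> G then 1 else 0))"
      unfolding lowL2[OF u0 n1 G] using finite_ad[of n G] by auto
  qed simp
  also have "(\<Sum>F\<in>insert (Suc n) ` {G \<in> omega_vertices n. n \<in> G}. g (card (ad (Suc n) F))) = (\<Sum>G\<in>{G\<in>omega_vertices n. n \<in> G}. g (card (ad n G)))"
    by (subst sum_insert_img) (auto intro!: sum.cong simp: ov_notin lowL3[OF u0 n1])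
  finally show ?thesis .
qed

lemma caseB:
  assumes ev: "even n" and n2: "2 \<le> n"
  shows "S (Suc (Suc (Suc n))) g = S (Suc (Suc n)) g + S (Suc n) (\<lambda>m. g (Suc m))"
proof -
  have u: "\<not> up (Suc (Suc n))" "1 \<le> Suc (Suc n)" using ev unfolding up_def by auto
  define N where "N = Suc (Suc n)"
  have "S (Suc N) g = (\<Sum>G\<in>omega_vertices N. g (card (ad N G) + (if N \<in> G then 1 else 0)))
     + (\<Sum>G\<in>{G\<in>omega_vertices N. N \<in> G}. g (card (ad N G)))"
    unfolding N_def by (rule lowSum[OF u])
  also have "(\<Sum>G\<in>omega_vertices N. g (card (ad N G) + (if N \<in> G then 1 else 0)))
     = (\<Sum>G\<in>{G\<in>omega_vertices N. N \<in> G}. g (card (ad N G) + (if N \<in> G then 1 else 0)))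
     + (\<Sum>G\<in>{G\<in>omega_vertices N. N \<notin> G}. g (card (ad N G) + (if N \<in> G then 1 else 0)))"
    by (rule sum_split[OF finite_ov])
  also have "(\<Sum>G\<in>{G\<in>omega_vertices N. N \<in> G}. g (card (ad N G) + (if N \<in> G then 1 else 0)))
     = (\<Sum>G\<in>{G\<in>omega_vertices N. N \<in> G}. g (Suc (card (ad N G))))"
    by (rule sum.cong) auto
  also have "\<dots> = S (Suc n) (\<lambda>m. g (Suc m))" unfolding N_def by (rule caseA(1)[OF ev n2])
  also have "(\<Sum>G\<in>{G\<in>omega_vertices N. N \<notin> G}. g (card (ad N G) + (if N \<in> G then 1 else 0)))
     = (\<Sum>G\<in>{G\<in>omega_vertices N. N \<notin> G}. g (card (ad N G)))"
    by (rule sum.cong) auto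
  also have "\<dots> = S n (\<lambda>m. g (Suc m))" unfolding N_def by (rule caseA(2)[OF ev n2])
  also have "(\<Sum>G\<in>{G\<in>omega_vertices N. N \<in> G}. g (card (ad N G))) = S (Suc n) g"
    unfolding N_def by (rule caseA(1)[OF ev n2])
  finally have "S (Suc N) g = S (Suc n) (\<lambda>m. g (Suc m)) + S n (\<lambda>m. g (Suc m)) + S (Suc n) g" .
  moreover have "S N g = S (Suc n) g + S n (\<lambda>m. g (Suc m))" unfolding N_def by (rule caseA_full[OF ev n2])
  ultimately show ?thesis unfolding N_def by simp
qed

lemma S_rec:
  assumes "4 \<le> N"
  shows "S N g = S (N - 1) g + S (N - 2) (\<lambda>m. g (Suc m))"
proof (cases "even N")
  case True
  define n where "n = N - 2"
  have N: "N = Suc (Suc n)" "even n" "2 \<le> n" using assms True unfolding n_def by auto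
  show ?thesis using caseA_full[OF N(2,3)] unfolding N(1) by simp
next
  case False
  define n where "n = N - 3"
  have N5: "5 \<le> N" using assms False by (cases "N = 4") auto
  have N: "N = Suc (Suc (Suc n))" "even n" "2 \<le> n" using N5 False unfolding n_def by auto
  show ?thesis using caseB[OF N(2,3)] unfolding N(1) by simp
qed


lemma P1: "P 1 F" unfolding P_def by auto
lemma P1': "P (Suc 0) F" unfolding P_def by auto

lemma ov1: "omega_vertices 1 = {{}, {1}}"
proof (rule set_eqI)
  fix F show "F \<in> omega_vertices 1 \<longleftrightarrow> F \<in> {{}, {1}}"
    unfolding ov_iff using P1[of F] by (auto simp: subset_singleton_iff)
qed

lemma ad1: "ad 1 {} = {1}" "ad 1 {1} = {}"
  by (auto simp: ad_mem P1 P1')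

lemma u12: "\<not> up 1" "\<not> up 2" unfolding up_def by auto

lemma ov2: "omega_vertices 2 = {{}, {1}, {2, 1}}"
proof -
  have "{G \<in> omega_vertices 1. 1 \<in> G} = {{1}}" unfolding ov1 by auto
  then show ?thesis using lowL1[OF u12(1)] ov1 by (simp add: numeral_2_eq_2 insert_commute)
qed

lemma ad2: "ad 2 {} = {1}" "ad 2 {1} = {2}" "ad 2 {2, 1} = {}"
proof -
  have m1: "{} \<in> omega_vertices 1" "{1} \<in> omega_vertices 1" using ov1 by auto
  show "ad 2 {} = {1}" using lowL2[OF u12(1) _ m1(1)] ad1 by (simp add: numeral_2_eq_2)
  show "ad 2 {1} = {2}" using lowL2[OF u12(1) _ m1(2)] ad1 by (simp add: numeral_2_eq_2)
  show "ad 2 {2, 1} = {}" using lowL3[OF u12(1) _ m1(2)] ad1 by (simp add: numeral_2_eq_2)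
qed

lemma S2: "S 2 g = g 0 + 2 * g 1"
proof -
  have "S 2 g = S (Suc 1) g" by (simp add: numeral_2_eq_2)
  also have "\<dots> = (\<Sum>G\<in>omega_vertices 1. g (card (ad 1 G) + (if 1 \<in> G then 1 else 0)))
     + (\<Sum>G\<in>{G\<in>omega_vertices 1. 1 \<in> G}. g (card (ad 1 G)))"
    by (rule lowSum[OF u12(1)]) simp
  also have "{G\<in>omega_vertices 1. 1 \<in> G} = {{1}}" unfolding ov1 by auto
  finally show ?thesis unfolding ov1 using ad1 by simp
qed

lemma S3: "S 3 g = g 0 + 3 * g 1"
proof -
  have "S 3 g = S (Suc 2) g" by (simp add: eval_nat_numeral)
  also have "\<dots> = (\<Sum>G\<in>omega_vertices 2. g (card (ad 2 G) + (if 2 \<in> G then 1 else 0)))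
     + (\<Sum>G\<in>{G\<in>omega_vertices 2. 2 \<in> G}. g (card (ad 2 G)))"
    by (rule lowSum[OF u12(2)]) simp
  also have "{G\<in>omega_vertices 2. 2 \<in> G} = {{2, 1}}" unfolding ov2 by auto
  finally show ?thesis unfolding ov2 using ad2 by simp
qed

definition W :: "nat \<Rightarrow> nat \<Rightarrow> nat" where "W n k = S n (\<lambda>m. m choose k)"

lemma q_W: "q_count n k = W n k" unfolding W_def S_def q_count_sum ..

lemma W_rec0: "4 \<le> N \<Longrightarrow> W N 0 = W (N - 1) 0 + W (N - 2) 0"
  unfolding W_def by (subst S_rec) simp_all

lemma W_recS: "4 \<le> N \<Longrightarrow> W N (Suc k) = W (N - 1) (Suc k) + W (N - 2) (Suc k) + W (N - 2) k"
proof -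
  assume N: "4 \<le> N"
  have "W N (Suc k) = S (N - 1) (\<lambda>m. m choose Suc k) + S (N - 2) (\<lambda>m. Suc m choose Suc k)"
    unfolding W_def by (rule S_rec[OF N])
  also have "S (N - 2) (\<lambda>m. Suc m choose Suc k) = W (N - 2) k + W (N - 2) (Suc k)"
    unfolding W_def S_def by (simp add: sum.distrib)
  finally show ?thesis unfolding W_def by simp
qed

lemma W2: "W 2 0 = 3" "W 2 1 = 2" "W 2 2 = 0" "W 2 3 = 0"
  unfolding W_def S2 by simp_all
lemma W3: "W 3 0 = 4" "W 3 1 = 3" "W 3 2 = 0" "W 3 3 = 0"
  unfolding W_def S3 by simp_all


lemma lucas_fib: "lucas (Suc n) = fib (Suc (Suc n)) + fib n"
proof -
  have "lucas (Suc n) = fib (Suc (Suc n)) + fib n \<and> lucas (Suc (Suc n)) = fib (Suc (Suc (Suc n))) + fib (Suc n)"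
    by (induction n) auto
  then show ?thesis by blast
qed

lemma two_step:
  assumes "Q 0" "Q 1" "\<And>m. Q m \<Longrightarrow> Q (Suc m) \<Longrightarrow> Q (Suc (Suc m))"
  shows "Q n"
proof -
  have "Q n \<and> Q (Suc n)" by (induction n) (use assms in auto)
  then show ?thesis by blast
qed

lemma Wr0: "W (Suc (Suc (Suc (Suc m)))) 0 = W (Suc (Suc (Suc m))) 0 + W (Suc (Suc m)) 0"
  using W_rec0[of "Suc (Suc (Suc (Suc m)))"] by simp

lemma WrS: "W (Suc (Suc (Suc (Suc m)))) (Suc k) = W (Suc (Suc (Suc m))) (Suc k) + W (Suc (Suc m)) (Suc k) + W (Suc (Suc m)) k"
  using W_recS[of "Suc (Suc (Suc (Suc m)))" k] by simp

lemma W0: "W (Suc (Suc m)) 0 = lucas (Suc (Suc m))"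
proof (induction m rule: two_step)
  case 1 then show ?case using W2 by (simp add: numeral_2_eq_2)
next
  case 2 then show ?case using W3 by (simp add: eval_nat_numeral)
next
  case (3 m) then show ?case using Wr0[of m] by simp
qed

lemma W1: "W (Suc (Suc m)) 1 = (m + 2) * fib (Suc m)"
proof (induction m rule: two_step)
  case 1 then show ?case using W2 by (simp add: numeral_2_eq_2)
next
  case 2 then show ?case using W3 by (simp add: eval_nat_numeral)
next
  case (3 m)
  have "W (Suc (Suc (Suc (Suc m)))) 1 = W (Suc (Suc (Suc m))) 1 + W (Suc (Suc m)) 1 + W (Suc (Suc m)) 0"
    using WrS[of m 0] by simp
  then show ?case using 3 W0[of m] by (simp add: lucas_fib algebra_simps)
qed

lemma W4_2: "W 4 2 = 2" and W5_2: "W 5 2 = 5"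
proof -
  show a: "W 4 2 = 2" using WrS[of 0 1] W2 W3 by (simp add: eval_nat_numeral)
  show "W 5 2 = 5" using WrS[of 1 1] W2 W3 a by (simp add: eval_nat_numeral)
qed

lemma W2f: "10 * W (Suc (Suc (Suc (Suc m)))) 2 = 2 * (m + 4) * fib (Suc m) + (m + 1) * (m + 4) * lucas (Suc (Suc m))"
proof (induction m rule: two_step)
  case 1 then show ?case using W4_2 by (simp add: eval_nat_numeral)
next
  case 2 then show ?case using W5_2 by (simp add: eval_nat_numeral)
next
  case (3 m)
  have "W (Suc (Suc (Suc (Suc (Suc (Suc m)))))) 2 = W (Suc (Suc (Suc (Suc (Suc m))))) 2 + W (Suc (Suc (Suc (Suc m)))) 2 + W (Suc (Suc (Suc (Suc m)))) 1"
    using WrS[of "Suc (Suc m)" 1] by (simp add: numeral_2_eq_2)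
  then show ?case using 3 W1[of "Suc (Suc m)"] by (simp add: lucas_fib algebra_simps)
qed

lemma W6_3: "W 6 3 = 2" and W7_3: "W 7 3 = 7"
proof -
  have a: "W 4 3 = 0" using WrS[of 0 2] W2 W3 by (simp add: eval_nat_numeral)
  have b: "W 5 3 = 0" using WrS[of 1 2] W2 W3 a W4_2 by (simp add: eval_nat_numeral)
  show c: "W 6 3 = 2" using WrS[of 2 2] a b W4_2 by (simp add: eval_nat_numeral)
  show "W 7 3 = 7" using WrS[of 3 2] b c W5_2 by (simp add: eval_nat_numeral)
qed

lemma W3f: "150 * W (Suc (Suc (Suc (Suc (Suc (Suc m)))))) 3 = 12 * (m + 6) * fib (Suc m) + 6 * (m + 1) * (m + 6) * lucas (Suc (Suc m))
   + 5 * (m + 1) * (m + 2) * (m + 6) * fib (Suc (Suc (Suc m)))"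
proof (induction m rule: two_step)
  case 1 then show ?case using W6_3 by (simp add: eval_nat_numeral)
next
  case 2 then show ?case using W7_3 by (simp add: eval_nat_numeral)
next
  case (3 m)
  have "W (Suc (Suc (Suc (Suc (Suc (Suc (Suc (Suc m)))))))) 3 = W (Suc (Suc (Suc (Suc (Suc (Suc (Suc m))))))) 3 + W (Suc (Suc (Suc (Suc (Suc (Suc m)))))) 3 + W (Suc (Suc (Suc (Suc (Suc (Suc m)))))) 2"
    using WrS[of "Suc (Suc (Suc (Suc m)))" 2] by (simp add: eval_nat_numeral)
  then show ?case using 3 W2f[of "Suc (Suc m)"] by (simp add: lucas_fib algebra_simps)
qed


theorem mainTheorem7:
  shows "(\<forall>n\<ge>2. q_count n 0 = lucas n \<and> q_count n 1 = n * fib (n - 1))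
       \<and> (\<forall>n\<ge>4. real (q_count n 2) =
            real n * real (fib (n - 3)) / 5 + (real n - 3) * real n * real (lucas (n - 2)) / 10)
       \<and> (\<forall>n\<ge>6. real (q_count n 3) =
            2 / 25 * real n * real (fib (n - 5)) + (real n - 5) * real n * real (lucas (n - 4)) / 25
            + ((real n)\<^sup>2 - 9 * real n + 20) * real n * real (fib (n - 3)) / 30)"
proof (intro conjI allI impI)
  fix n :: nat assume n: "2 \<le> n"
  define m where "m = n - 2"
  have m: "n = Suc (Suc m)" using n unfolding m_def by arith
  show "q_count n 0 = lucas n" unfolding q_W m by (rule W0)
  show "q_count n 1 = n * fib (n - 1)" unfolding q_W m W1 by simp
next
  fix n :: nat assume n: "4 \<le> n"
  define m where "m = n - 4"
  have m: "n = Suc (Suc (Suc (Suc m)))" using n unfolding m_def by arith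
  have h: "real (10 * W n 2) = real (2 * (m + 4) * fib (Suc m) + (m + 1) * (m + 4) * lucas (Suc (Suc m)))"
    unfolding m W2f ..
  have e1: "n - 3 = Suc m" "n - 2 = Suc (Suc m)" using m by auto
  have rn: "real n = real m + 4" using m by simp
  show "real (q_count n 2) = real n * real (fib (n - 3)) / 5 + (real n - 3) * real n * real (lucas (n - 2)) / 10"
    unfolding q_W e1 rn using h by (simp add: field_simps)
next
  fix n :: nat assume n: "6 \<le> n"
  define m where "m = n - 6"
  have m: "n = Suc (Suc (Suc (Suc (Suc (Suc m)))))" using n unfolding m_def by arith
  have h: "real (150 * W n 3) = real (12 * (m + 6) * fib (Suc m) + 6 * (m + 1) * (m + 6) * lucas (Suc (Suc m))
   + 5 * (m + 1) * (m + 2) * (m + 6) * fib (Suc (Suc (Suc m))))"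
    unfolding m W3f ..
  have e1: "n - 5 = Suc m" "n - 4 = Suc (Suc m)" "n - 3 = Suc (Suc (Suc m))" using m by auto
  have rn: "real n = real m + 6" using m by simp
  show "real (q_count n 3) = 2 / 25 * real n * real (fib (n - 5)) + (real n - 5) * real n * real (lucas (n - 4)) / 25
            + ((real n)\<^sup>2 - 9 * real n + 20) * real n * real (fib (n - 3)) / 30"
    unfolding q_W e1 rn using h by (simp add: field_simps power2_eq_square)
qed

end
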